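(* Let $X$ be an order continuous rearrangement invariant sequence space with the Fatou property and let $F$ be an Orlicz function. Assume that the Calderón–Lozanovskiĭ class is closed under the Cesàro operator $C$. If $F$ vanishes only at zero and does not satisfy the $\Delta_2(0)$-condition, then the space $C(X_F)$ contains a lattice isometric copy of $\ell_\infty$.
   Context: A rearrangement invariant sequence space is a Banach space $X$ of real sequences with the ideal property ($|x|\le|y|$, $y\in X$ imply $x\in X$, $\|x\|_X\le\|y\|_X$), containing a sequence with all coordinates nonzero, in which equimeasurable sequences have equal norms. Order continuous: every $x\in X$ satisfies $\|x^{(n)}\|_X\to0$ whenever $0\le x^{(n)}\le|x|$, $x^{(n)}\downarrow0$. Fatou property: $0\le x^{(n)}\uparrow x$, $\sup\|x^{(n)}\|_X<\infty$ imply $x\in X$ and $\|x^{(n)}\|_X\uparrow\|x\|_X$. An Orlicz function is a non-decreasing convex $F:[0,\infty)\to[0,\infty]$ with $F(0)=0$. The Calderón–Lozanovskiĭ space $X_F$ consists of sequences $f$ with $\|f\|_{X_F}=\inf\{\lambda>0:\|F(|f|/\lambda)\|_X\le1\}<\infty$; the Calderón–Lozanovskiĭ class is $\{f\in X_F:\|F(|f|)\|_X<\infty\}$, and it is closed under $C$ if $f$ in the class implies $C(|f|)$ is in the class. The discrete Cesàro operator is $C(x)_n=\frac1n\sum_{k=1}^nx_k$, and $C(X_F)=\{x: C(|x|)\in X_F\}$ with norm $\|C(|x|)\|_{X_F}$. $F$ satisfies $\Delta_2(0)$ if there are $K>0$, $u_0>0$ with $F(u_0)>0$ and $F(2u)\le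 KF(u)$ for $0\le u\le u_0$. A lattice isometric copy of $\ell_\infty$ is the image of a linear isometric lattice-homomorphic embedding of $\ell_\infty$. *)

theory Defs
  imports Complex_Main "HOL-Library.Extended_Real"
begin

text \<open>Real sequences are functions nat => real; index 0 corresponds to the paper's index 1.
A sequence space is given by a carrier set X together with a norm function N (only
meaningful on X).\<close>

definition banach_seq_space :: "(nat \<Rightarrow> real) set \<Rightarrow> ((nat \<Rightarrow> real) \<Rightarrow> real) \<Rightarrow> bool" where
  "banach_seq_space X N \<longleftrightarrow>
     (\<lambda>n. 0) \<in> X \<and>
     (\<forall>x\<in>X. \<forall>y\<in>X. (\<lambda>n. x n + y n) \<in> X) \<and>
     (\<forall>x\<in>X. \<forall>c. (\<lambda>n. c * x n) \<in> X) \<and>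
     (\<forall>x\<in>X. 0 \<le> N x \<and> (N x = 0 \<longleftrightarrow> x = (\<lambda>n. 0))) \<and>
     (\<forall>x\<in>X. \<forall>c. N (\<lambda>n. c * x n) = \<bar>c\<bar> * N x) \<and>
     (\<forall>x\<in>X. \<forall>y\<in>X. N (\<lambda>n. x n + y n) \<le> N x + N y) \<and>
     (\<forall>s. (\<forall>k. s k \<in> X) \<and>
          (\<forall>e>0. \<exists>M. \<forall>m\<ge>M. \<forall>k\<ge>M. N (\<lambda>n. s m n - s k n) < e)
          \<longrightarrow> (\<exists>x\<in>X. (\<lambda>k. N (\<lambda>n. s k n - x n)) \<longlonglongrightarrow> 0))"

definition ideal_property :: "(nat \<Rightarrow> real) set \<Rightarrow> ((nat \<Rightarrow> real) \<Rightarrow> real) \<Rightarrow> bool" where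
  "ideal_property X N \<longleftrightarrow>
     (\<forall>x y. y \<in> X \<and> (\<forall>n. \<bar>x n\<bar> \<le> \<bar>y n\<bar>) \<longrightarrow> x \<in> X \<and> N x \<le> N y)"

text \<open>Equal distribution functions w.r.t. counting measure (size of level sets,
possibly infinite).\<close>
definition same_size :: "'a set \<Rightarrow> 'b set \<Rightarrow> bool" where
  "same_size A B \<longleftrightarrow> (finite A \<longleftrightarrow> finite B) \<and> card A = card B"

definition equimeasurable :: "(nat \<Rightarrow> real) \<Rightarrow> (nat \<Rightarrow> real) \<Rightarrow> bool" where
  "equimeasurable x y \<longleftrightarrow>
     (\<forall>t::real. t \<ge> 0 \<longrightarrow> same_size {n. \<bar>x n\<bar> > t} {n. \<bar>y n\<bar> > t})"

definition ri_seq_space :: "(nat \<Rightarrow> real) set \<Rightarrow> ((nat \<Rightarrow> real) \<Rightarrow> real) \<Rightarrow> bool" where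
  "ri_seq_space X N \<longleftrightarrow>
     banach_seq_space X N \<and> ideal_property X N \<and>
     (\<exists>x\<in>X. \<forall>n. x n \<noteq> 0) \<and>
     (\<forall>x\<in>X. \<forall>y. equimeasurable x y \<longrightarrow> y \<in> X \<and> N y = N x)"

definition order_continuous :: "(nat \<Rightarrow> real) set \<Rightarrow> ((nat \<Rightarrow> real) \<Rightarrow> real) \<Rightarrow> bool" where
  "order_continuous X N \<longleftrightarrow>
     (\<forall>x\<in>X. \<forall>s::nat \<Rightarrow> nat \<Rightarrow> real.
        (\<forall>k n. 0 \<le> s k n \<and> s k n \<le> \<bar>x n\<bar>) \<and>
        (\<forall>k n. s (Suc k) n \<le> s k n) \<and>
        (\<forall>n. (\<lambda>k. s k n) \<longlonglongrightarrow> 0)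
        \<longrightarrow> (\<lambda>k. N (s k)) \<longlonglongrightarrow> 0)"

definition fatou_property :: "(nat \<Rightarrow> real) set \<Rightarrow> ((nat \<Rightarrow> real) \<Rightarrow> real) \<Rightarrow> bool" where
  "fatou_property X N \<longleftrightarrow>
     (\<forall>x. \<forall>s::nat \<Rightarrow> nat \<Rightarrow> real.
        (\<forall>k n. 0 \<le> s k n \<and> s k n \<le> s (Suc k) n) \<and>
        (\<forall>n. (\<lambda>k. s k n) \<longlonglongrightarrow> x n) \<and>
        (\<forall>k. s k \<in> X) \<and> (\<exists>B. \<forall>k. N (s k) \<le> B)
        \<longrightarrow> x \<in> X \<and> (\<lambda>k. N (s k)) \<longlonglongrightarrow> N x)"

text \<open>Orlicz functions may take the value infinity, hence values in ereal; only
arguments u >= 0 are relevant.\<close>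
definition orlicz :: "(real \<Rightarrow> ereal) \<Rightarrow> bool" where
  "orlicz F \<longleftrightarrow> F 0 = 0 \<and> (\<forall>u\<ge>0. 0 \<le> F u) \<and>
     (\<forall>u v. 0 \<le> u \<and> u \<le> v \<longrightarrow> F u \<le> F v) \<and>
     (\<forall>u v t. 0 \<le> u \<and> 0 \<le> v \<and> 0 \<le> t \<and> t \<le> 1 \<longrightarrow>
        F (t * u + (1 - t) * v) \<le> ereal t * F u + ereal (1 - t) * F v)"

definition Fcomp :: "(real \<Rightarrow> ereal) \<Rightarrow> (nat \<Rightarrow> real) \<Rightarrow> (nat \<Rightarrow> real)" where
  "Fcomp F f = (\<lambda>n. real_of_ereal (F \<bar>f n\<bar>))"

definition F_in :: "(nat \<Rightarrow> real) set \<Rightarrow> (real \<Rightarrow> ereal) \<Rightarrow> (nat \<Rightarrow> real) \<Rightarrow> bool" where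
  "F_in X F f \<longleftrightarrow> (\<forall>n. F \<bar>f n\<bar> \<noteq> \<infinity>) \<and> Fcomp F f \<in> X"

definition CL_admissible :: "(nat \<Rightarrow> real) set \<Rightarrow> ((nat \<Rightarrow> real) \<Rightarrow> real) \<Rightarrow> (real \<Rightarrow> ereal)
    \<Rightarrow> (nat \<Rightarrow> real) \<Rightarrow> real \<Rightarrow> bool" where
  "CL_admissible X N F f r \<longleftrightarrow> r > 0 \<and> F_in X F (\<lambda>n. f n / r) \<and> N (Fcomp F (\<lambda>n. f n / r)) \<le> 1"

definition CL_space :: "(nat \<Rightarrow> real) set \<Rightarrow> ((nat \<Rightarrow> real) \<Rightarrow> real) \<Rightarrow> (real \<Rightarrow> ereal)
    \<Rightarrow> (nat \<Rightarrow> real) set" where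
  "CL_space X N F = {f. \<exists>r. CL_admissible X N F f r}"

definition CL_norm :: "(nat \<Rightarrow> real) set \<Rightarrow> ((nat \<Rightarrow> real) \<Rightarrow> real) \<Rightarrow> (real \<Rightarrow> ereal)
    \<Rightarrow> (nat \<Rightarrow> real) \<Rightarrow> real" where
  "CL_norm X N F f = Inf {r. CL_admissible X N F f r}"

definition CL_class :: "(nat \<Rightarrow> real) set \<Rightarrow> ((nat \<Rightarrow> real) \<Rightarrow> real) \<Rightarrow> (real \<Rightarrow> ereal)
    \<Rightarrow> (nat \<Rightarrow> real) set" where
  "CL_class X N F = {f \<in> CL_space X N F. F_in X F f}"

definition cesaro :: "(nat \<Rightarrow> real) \<Rightarrow> (nat \<Rightarrow> real)" where
  "cesaro x = (\<lambda>n. (\<Sum>k\<le>n. x k) / real (Suc n))"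

definition CL_class_closed_under_cesaro ::
  "(nat \<Rightarrow> real) set \<Rightarrow> ((nat \<Rightarrow> real) \<Rightarrow> real) \<Rightarrow> (real \<Rightarrow> ereal) \<Rightarrow> bool" where
  "CL_class_closed_under_cesaro X N F \<longleftrightarrow>
     (\<forall>f \<in> CL_class X N F. cesaro (\<lambda>n. \<bar>f n\<bar>) \<in> CL_class X N F)"

definition cesaro_space :: "(nat \<Rightarrow> real) set \<Rightarrow> ((nat \<Rightarrow> real) \<Rightarrow> real) \<Rightarrow> (real \<Rightarrow> ereal)
    \<Rightarrow> (nat \<Rightarrow> real) set" where
  "cesaro_space X N F = {x. cesaro (\<lambda>n. \<bar>x n\<bar>) \<in> CL_space X N F}"

definition cesaro_norm :: "(nat \<Rightarrow> real) set \<Rightarrow> ((nat \<Rightarrow> real) \<Rightarrow> real) \<Rightarrow> (real \<Rightarrow> ereal)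
    \<Rightarrow> (nat \<Rightarrow> real) \<Rightarrow> real" where
  "cesaro_norm X N F x = CL_norm X N F (cesaro (\<lambda>n. \<bar>x n\<bar>))"

definition delta2_zero :: "(real \<Rightarrow> ereal) \<Rightarrow> bool" where
  "delta2_zero F \<longleftrightarrow> (\<exists>K>0. \<exists>u0>0. F u0 > 0 \<and>
      (\<forall>u. 0 \<le> u \<and> u \<le> u0 \<longrightarrow> F (2 * u) \<le> ereal K * F u))"

definition linf :: "(nat \<Rightarrow> real) set" where
  "linf = {a. bdd_above (range (\<lambda>n. \<bar>a n\<bar>))}"

definition linf_norm :: "(nat \<Rightarrow> real) \<Rightarrow> real" where
  "linf_norm a = (SUP n. \<bar>a n\<bar>)"

definition contains_lattice_isometric_linf ::
  "(nat \<Rightarrow> real) set \<Rightarrow> ((nat \<Rightarrow> real) \<Rightarrow> real) \<Rightarrow> bool" where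
  "contains_lattice_isometric_linf E NE \<longleftrightarrow>
     (\<exists>T :: (nat \<Rightarrow> real) \<Rightarrow> (nat \<Rightarrow> real).
        (\<forall>a\<in>linf. T a \<in> E) \<and>
        (\<forall>a\<in>linf. \<forall>b\<in>linf. T (\<lambda>n. a n + b n) = (\<lambda>n. T a n + T b n)) \<and>
        (\<forall>a\<in>linf. \<forall>c. T (\<lambda>n. c * a n) = (\<lambda>n. c * T a n)) \<and>
        (\<forall>a\<in>linf. NE (T a) = linf_norm a) \<and>
        (\<forall>a\<in>linf. \<forall>b\<in>linf. T (\<lambda>n. max (a n) (b n)) = (\<lambda>n. max (T a n) (T b n))))"

end

theory Submission
  imports Defs "HOL-Library.Nat_Bijection"
begin

definition idx :: "(nat \<Rightarrow> nat) \<Rightarrow> nat \<Rightarrow> nat" where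
  "idx S n = (LEAST k. n < S (Suc k))"

lemma sm_ge: "strict_mono (S::nat\<Rightarrow>nat) \<Longrightarrow> k \<le> S k"
  by (simp add: strict_mono_imp_increasing)

lemma idx_prop:
  assumes sm: "strict_mono (S::nat\<Rightarrow>nat)" and n: "S 0 \<le> n"
  shows "S (idx S n) \<le> n \<and> n < S (Suc (idx S n))"
proof -
  have ex: "\<exists>k. n < S (Suc k)" using sm_ge[OF sm, of "Suc n"] by (intro exI[of _ n]) simp
  have up: "n < S (Suc (idx S n))" unfolding idx_def by (rule LeastI_ex[OF ex])
  have lo: "S (idx S n) \<le> n"
  proof (cases "idx S n")
    case 0 then show ?thesis using n by simp
  next
    case (Suc j)
    then have "j < idx S n" by simp
    then have "\<not> n < S (Suc j)" unfolding idx_def by (rule not_less_Least)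
    then show ?thesis using Suc by simp
  qed
  from lo up show ?thesis by blast
qed

lemma idx_unique:
  assumes sm: "strict_mono (S::nat\<Rightarrow>nat)" and a: "S k \<le> n" "n < S (Suc k)"
  shows "idx S n = k"
proof -
  have n0: "S 0 \<le> n" using a(1) strict_mono_less_eq[OF sm, of 0 k] by simp
  note p = idx_prop[OF sm n0]
  show ?thesis
  proof (rule ccontr)
    assume ne: "idx S n \<noteq> k"
    show False
    proof (cases "idx S n < k")
      case True
      then have "S (Suc (idx S n)) \<le> S k" using strict_mono_less_eq[OF sm] by simp
      then show False using p a by simp
    next
      case False
      then have "Suc k \<le> idx S n" using ne by simp
      then have "S (Suc k) \<le> S (idx S n)" using strict_mono_less_eq[OF sm] by simp
      then show False using p a by simp
    qed
  qed
qed

lemma idx_mono: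
  assumes sm: "strict_mono (S::nat\<Rightarrow>nat)" and n: "S 0 \<le> n" and le: "n \<le> n'"
  shows "idx S n \<le> idx S n'"
proof (rule ccontr)
  assume "\<not> ?thesis"
  then have "Suc (idx S n') \<le> idx S n" by simp
  then have "S (Suc (idx S n')) \<le> S (idx S n)" using strict_mono_less_eq[OF sm] by simp
  then show False using idx_prop[OF sm n] idx_prop[OF sm, of n'] n le by simp
qed

locale CS =
  fixes X :: "(nat \<Rightarrow> real) set" and N :: "(nat \<Rightarrow> real) \<Rightarrow> real"
    and F :: "real \<Rightarrow> ereal"
  assumes ri: "ri_seq_space X N"
    and oc: "order_continuous X N"
    and fat: "fatou_property X N"
    and orl: "orlicz F"
    and clo: "CL_class_closed_under_cesaro X N F"
    and posF: "\<forall>u>0. F u \<noteq> 0"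
    and nd2: "\<not> delta2_zero F"
begin

lemma bs: "banach_seq_space X N" using ri by (simp add: ri_seq_space_def)

lemma zero_in: "(\<lambda>n. 0) \<in> X" using bs unfolding banach_seq_space_def by blast
lemma add_in: "x \<in> X \<Longrightarrow> y \<in> X \<Longrightarrow> (\<lambda>n. x n + y n) \<in> X"
  using bs unfolding banach_seq_space_def by blast
lemma smul_in: "x \<in> X \<Longrightarrow> (\<lambda>n. c * x n) \<in> X"
  using bs unfolding banach_seq_space_def by blast
lemma N_nonneg: "x \<in> X \<Longrightarrow> 0 \<le> N x"
  using bs unfolding banach_seq_space_def by blast
lemma N_zero_iff: "x \<in> X \<Longrightarrow> N x = 0 \<longleftrightarrow> x = (\<lambda>n. 0)"
  using bs unfolding banach_seq_space_def by blast
lemma N_smul: "x \<in> X \<Longrightarrow> N (\<lambda>n. c * x n) = \<bar>c\<bar> * N x"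
  using bs unfolding banach_seq_space_def by blast
lemma N_tri: "x \<in> X \<Longrightarrow> y \<in> X \<Longrightarrow> N (\<lambda>n. x n + y n) \<le> N x + N y"
  using bs unfolding banach_seq_space_def by blast
lemma ideal: "y \<in> X \<Longrightarrow> (\<And>n. \<bar>x n\<bar> \<le> \<bar>y n\<bar>) \<Longrightarrow> x \<in> X \<and> N x \<le> N y"
  using ri unfolding ri_seq_space_def ideal_property_def by blast
lemma equi: "x \<in> X \<Longrightarrow> equimeasurable x y \<Longrightarrow> y \<in> X \<and> N y = N x"
  using ri unfolding ri_seq_space_def by blast
lemma allnz: "\<exists>x\<in>X. \<forall>n. x n \<noteq> 0"
  using ri unfolding ri_seq_space_def by blast

lemma F0: "F 0 = 0" using orl unfolding orlicz_def by blast
lemma Fnn: "0 \<le> u \<Longrightarrow> 0 \<le> F u" using orl unfolding orlicz_def by blast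
lemma Fmono: "0 \<le> u \<Longrightarrow> u \<le> v \<Longrightarrow> F u \<le> F v" using orl unfolding orlicz_def by blast
lemma Fconv: "0 \<le> u \<Longrightarrow> 0 \<le> v \<Longrightarrow> 0 \<le> t \<Longrightarrow> t \<le> 1 \<Longrightarrow>
   F (t * u + (1 - t) * v) \<le> ereal t * F u + ereal (1 - t) * F v"
  using orl unfolding orlicz_def by blast

lemma ereal_le_real: "0 \<le> x \<Longrightarrow> x \<le> y \<Longrightarrow> y \<noteq> \<infinity> \<Longrightarrow> real_of_ereal x \<le> real_of_ereal y"
  by (rule real_of_ereal_positive_mono)

lemma Fcomp_nn: "0 \<le> Fcomp F v n"
  by (simp add: Fcomp_def Fnn real_of_ereal_pos)

lemma M1:
  assumes le: "\<And>n. \<bar>v n\<bar> \<le> \<bar>w n\<bar>" and fw: "F_in X F w"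
  shows "F_in X F v \<and> N (Fcomp F v) \<le> N (Fcomp F w)"
proof -
  have fin: "F \<bar>w n\<bar> \<noteq> \<infinity>" for n using fw by (simp add: F_in_def)
  have wx: "Fcomp F w \<in> X" using fw by (simp add: F_in_def)
  have lev: "F \<bar>v n\<bar> \<le> F \<bar>w n\<bar>" for n by (rule Fmono) (simp_all add: le)
  have finv: "F \<bar>v n\<bar> \<noteq> \<infinity>" for n using lev[of n] fin[of n] by (metis ereal_infty_less_eq(1))
  have "\<bar>Fcomp F v n\<bar> \<le> \<bar>Fcomp F w n\<bar>" for n
  proof -
    have "Fcomp F v n \<le> Fcomp F w n" unfolding Fcomp_def
      using ereal_le_real[OF Fnn lev[of n] fin[of n]] by simp
    then show ?thesis using Fcomp_nn[of v n] Fcomp_nn[of w n] by simp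
  qed
  then have "Fcomp F v \<in> X \<and> N (Fcomp F v) \<le> N (Fcomp F w)" by (rule ideal[OF wx])
  then show ?thesis using finv unfolding F_in_def by simp
qed


lemma unit_in: "(\<lambda>n. if n = m then c else 0) \<in> X"
proof -
  obtain x where x: "x \<in> X" "\<forall>n. x n \<noteq> 0" using allnz by blast
  have xm: "(\<lambda>n. (c / x m) * x n) \<in> X" by (rule smul_in[OF x(1)])
  have "\<bar>(if n = m then c else 0)\<bar> \<le> \<bar>(c / x m) * x n\<bar>" for n
    using x(2) by (cases "n = m") auto
  from ideal[OF xm this] show ?thesis by blast
qed

lemma FS: "(\<And>n. L \<le> n \<Longrightarrow> v n = 0) \<Longrightarrow> v \<in> X"
proof (induction L arbitrary: v)
  case 0
  then have "v = (\<lambda>n. 0)" by auto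
  then show ?case using zero_in by simp
next
  case (Suc L)
  let ?v' = "\<lambda>n. if n = L then 0 else v n"
  have v': "?v' \<in> X" by (rule Suc.IH) (use Suc.prems in auto)
  have s: "(\<lambda>n. ?v' n + (if n = L then v L else 0)) \<in> X" by (rule add_in[OF v' unit_in])
  have "(\<lambda>n. ?v' n + (if n = L then v L else 0)) = v" by auto
  then show ?case using s by simp
qed

lemma ces_mono: "(\<And>i. x i \<le> y i) \<Longrightarrow> cesaro x n \<le> cesaro y n"
  unfolding cesaro_def by (intro divide_right_mono sum_mono) auto

lemma ces_nn: "(\<And>i. 0 \<le> x i) \<Longrightarrow> 0 \<le> cesaro x n"
  unfolding cesaro_def by (intro divide_nonneg_nonneg sum_nonneg) auto

lemma ces_scale: "cesaro (\<lambda>i. c * x i) n = c * cesaro x n"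
  unfolding cesaro_def by (simp add: sum_distrib_left)

lemma ces_local: "(\<And>i. i \<le> n \<Longrightarrow> x i = y i) \<Longrightarrow> cesaro x n = cesaro y n"
  unfolding cesaro_def by (metis (no_types, lifting) atMost_iff sum.cong)

lemma exists_b: "\<exists>b>0. F b \<noteq> \<infinity>"
proof (rule ccontr)
  assume "\<not> ?thesis"
  then have inf: "\<And>b. b > 0 \<Longrightarrow> F b = \<infinity>" by auto
  have "delta2_zero F"
    unfolding delta2_zero_def
  proof (intro exI conjI allI impI)
    show "(1::real) > 0" by simp
    show "(1::real) > 0" by simp
    show "F 1 > 0" using inf[of 1] by simp
    fix u :: real assume u: "0 \<le> u \<and> u \<le> 1"
    show "F (2 * u) \<le> ereal 1 * F u"
    proof (cases "u = 0")
      case True then show ?thesis by (simp add: F0)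
    next
      case False then have "u > 0" using u by simp
      then show ?thesis using inf[of u] by simp
    qed
  qed
  then show False using nd2 by simp
qed

definition bb where "bb = (SOME b. b > 0 \<and> F b \<noteq> \<infinity>)"
lemma bb: "bb > 0" "F bb \<noteq> \<infinity>"
  using someI_ex[OF exists_b] unfolding bb_def by auto

definition rF where "rF u = real_of_ereal (F u)"

lemma F_real: "0 \<le> u \<Longrightarrow> F u \<noteq> \<infinity> \<Longrightarrow> F u = ereal (rF u)"
proof -
  assume a: "0 \<le> u" "F u \<noteq> \<infinity>"
  have "0 \<le> F u" using Fnn a by blast
  then show ?thesis using a(2) unfolding rF_def by (cases "F u") auto
qed

lemma rF_nn: "0 \<le> u \<Longrightarrow> 0 \<le> rF u" unfolding rF_def
  by (rule real_of_ereal_pos, rule Fnn)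

lemma fin_le: "0 \<le> u \<Longrightarrow> u \<le> v \<Longrightarrow> F v \<noteq> \<infinity> \<Longrightarrow> F u \<noteq> \<infinity>"
proof -
  assume a: "0 \<le> u" "u \<le> v" "F v \<noteq> \<infinity>"
  have "F u \<le> F v" using Fmono a by blast
  then show ?thesis using a(3) by (cases "F u"; cases "F v") auto
qed

lemma rF_mono: "0 \<le> u \<Longrightarrow> u \<le> v \<Longrightarrow> F v \<noteq> \<infinity> \<Longrightarrow> rF u \<le> rF v"
proof -
  assume a: "0 \<le> u" "u \<le> v" "F v \<noteq> \<infinity>"
  have "F u \<le> F v" using Fmono a by blast
  moreover have "0 \<le> F u" using Fnn a by blast
  ultimately show ?thesis unfolding rF_def using ereal_le_real a(3) by blast
qed

lemma Fconv_real:
  assumes "0 \<le> u" "0 \<le> v" "0 \<le> t" "t \<le> 1" "F u \<noteq> \<infinity>" "F v \<noteq> \<infinity>"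
  shows "F (t * u + (1 - t) * v) \<noteq> \<infinity> \<and> rF (t * u + (1 - t) * v) \<le> t * rF u + (1 - t) * rF v"
proof -
  have "F (t * u + (1 - t) * v) \<le> ereal t * F u + ereal (1 - t) * F v" by (rule Fconv) (use assms in auto)
  also have "\<dots> = ereal (t * rF u + (1 - t) * rF v)"
  proof -
    have e1: "F u = ereal (rF u)" using F_real assms by blast
    have e2: "F v = ereal (rF v)" using F_real assms by blast
    show ?thesis unfolding e1 e2 by simp
  qed
  finally have le: "F (t * u + (1 - t) * v) \<le> ereal (t * rF u + (1 - t) * rF v)" .
  then have "F (t * u + (1 - t) * v) \<noteq> \<infinity>" by auto
  moreover have "rF (t * u + (1 - t) * v) \<le> t * rF u + (1 - t) * rF v"
    using ereal_le_real[OF Fnn le] assms by (simp add: rF_def)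
  ultimately show ?thesis by simp
qed

lemma rF_lin: "0 \<le> u \<Longrightarrow> 0 \<le> t \<Longrightarrow> t \<le> 1 \<Longrightarrow> F u \<noteq> \<infinity> \<Longrightarrow> rF (t * u) \<le> t * rF u"
  using Fconv_real[of u 0 t] by (simp add: F0 rF_def)

lemma rF_pos: "0 < u \<Longrightarrow> F u \<noteq> \<infinity> \<Longrightarrow> 0 < rF u"
proof -
  assume a: "0 < u" "F u \<noteq> \<infinity>"
  have e: "F u = ereal (rF u)" using F_real a by simp
  have "F u \<noteq> 0" using posF a by simp
  then have "rF u \<noteq> 0" using e by (simp add: zero_ereal_def)
  then show ?thesis using rF_nn[of u] a by simp
qed

lemma Fcomp_eq: "Fcomp F v n = rF \<bar>v n\<bar>" by (simp add: Fcomp_def rF_def)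


definition iv :: "nat \<Rightarrow> nat \<Rightarrow> nat \<Rightarrow> real" where
  "iv a m = (\<lambda>n. if a \<le> n \<and> n < a + m then 1 else 0)"

definition phi where "phi m = N (iv 0 m)"

lemma iv_in: "iv a m \<in> X"
  by (rule FS[of "a + m"]) (simp add: iv_def)

lemma iv_equi: "equimeasurable (iv 0 m) (iv a m)"
  unfolding equimeasurable_def same_size_def
proof (intro allI impI)
  fix t :: real assume t: "0 \<le> t"
  show "(finite {n. t < \<bar>iv 0 m n\<bar>} = finite {n. t < \<bar>iv a m n\<bar>}) \<and>
        card {n. t < \<bar>iv 0 m n\<bar>} = card {n. t < \<bar>iv a m n\<bar>}"
  proof (cases "t < 1")
    case True
    have e1: "{n. t < \<bar>iv 0 m n\<bar>} = {0..<m}" using True t by (auto simp: iv_def)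
    have e2: "{n. t < \<bar>iv a m n\<bar>} = {a..<a+m}" using True t by (auto simp: iv_def)
    show ?thesis unfolding e1 e2 by simp
  next
    case False
    have e1: "{n. t < \<bar>iv 0 m n\<bar>} = {}" using False t by (auto simp: iv_def)
    have e2: "{n. t < \<bar>iv a m n\<bar>} = {}" using False t by (auto simp: iv_def)
    show ?thesis unfolding e1 e2 by simp
  qed
qed

lemma N_iv: "N (iv a m) = phi m"
  using equi[OF iv_in iv_equi] unfolding phi_def by simp

lemma N_civ: "N (\<lambda>n. c * iv a m n) = \<bar>c\<bar> * phi m"
  using N_smul[OF iv_in, of c a m] N_iv by simp

lemma phi0: "phi 0 = 0"
proof -
  have "iv 0 0 = (\<lambda>n. 0)" by (simp add: iv_def)
  then show ?thesis unfolding phi_def using N_zero_iff[OF zero_in] by simp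
qed

lemma phi_nn: "0 \<le> phi m" unfolding phi_def by (rule N_nonneg[OF iv_in])

lemma phi_suc: "phi (Suc m) \<le> phi m + phi 1"
proof -
  have "iv 0 (Suc m) = (\<lambda>n. iv 0 m n + iv m 1 n)" by (auto simp: iv_def)
  then have "phi (Suc m) = N (\<lambda>n. iv 0 m n + iv m 1 n)" unfolding phi_def by simp
  also have "\<dots> \<le> N (iv 0 m) + N (iv m 1)" by (rule N_tri[OF iv_in iv_in])
  finally show ?thesis using N_iv by simp
qed

lemma phi_mono: "m \<le> m' \<Longrightarrow> phi m \<le> phi m'"
  unfolding phi_def
  by (rule conjunct2[OF ideal[OF iv_in]]) (auto simp: iv_def)

lemma phi1_pos: "0 < phi 1"
proof -
  have "iv 0 1 \<noteq> (\<lambda>n. 0)" by (auto simp: iv_def fun_eq_iff)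
  then have "N (iv 0 1) \<noteq> 0" using N_zero_iff[OF iv_in] by simp
  then show ?thesis using phi_nn[of 1] unfolding phi_def by simp
qed

lemma fat_use:
  assumes "\<And>k n. 0 \<le> s k n" "\<And>k n. s k n \<le> s (Suc k) n"
    "\<And>n. (\<lambda>k. s k n) \<longlonglongrightarrow> x n" "\<And>k. s k \<in> X" "\<And>k. N (s k) \<le> B"
  shows "x \<in> X \<and> (\<lambda>k. N (s k)) \<longlonglongrightarrow> N x"
  using fat assms unfolding fatou_property_def by blast

lemma oc_use:
  assumes "x \<in> X" "\<And>k n. 0 \<le> s k n" "\<And>k n. s k n \<le> \<bar>x n\<bar>" "\<And>k n. s (Suc k) n \<le> s k n"
    "\<And>n. (\<lambda>k. s k n) \<longlonglongrightarrow> 0"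
  shows "(\<lambda>k. N (s k)) \<longlonglongrightarrow> 0"
  using oc assms unfolding order_continuous_def by blast

lemma ev_lim: "(\<And>k. k \<ge> K \<Longrightarrow> f k = l) \<Longrightarrow> f \<longlonglongrightarrow> l"
  by (rule tendsto_eventually) (auto simp: eventually_sequentially)

lemma phi_unb: "\<exists>m. phi m > B"
proof (rule ccontr)
  assume "\<not> ?thesis"
  then have bd: "phi m \<le> B" for m by (simp add: not_less)
  have one: "(\<lambda>n. 1::real) \<in> X"
  proof -
    have "(\<lambda>n. 1::real) \<in> X \<and> (\<lambda>k. N (iv 0 k)) \<longlonglongrightarrow> N (\<lambda>n. 1)"
    proof (rule fat_use[where B=B])
      show "0 \<le> iv 0 k n" for k n by (simp add: iv_def)
      show "iv 0 k n \<le> iv 0 (Suc k) n" for k n by (simp add: iv_def)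
      show "(\<lambda>k. iv 0 k n) \<longlonglongrightarrow> 1" for n by (rule ev_lim[of "Suc n"]) (simp add: iv_def)
      show "iv 0 k \<in> X" for k by (rule iv_in)
      show "N (iv 0 k) \<le> B" for k using bd phi_def by simp
    qed
    then show ?thesis by blast
  qed
  let ?s = "\<lambda>k n. if k \<le> n then (1::real) else 0"
  have lim: "(\<lambda>k. N (?s k)) \<longlonglongrightarrow> 0"
  proof (rule oc_use[OF one])
    show "(\<lambda>k. ?s k n) \<longlonglongrightarrow> 0" for n by (rule ev_lim[of "Suc n"]) simp
  qed auto
  have ge: "phi 1 \<le> N (?s k)" for k
  proof -
    have "?s k \<in> X \<and> N (?s k) \<le> N (\<lambda>n. 1)" by (rule ideal[OF one]) simp
    then have sx: "?s k \<in> X" by blast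
    have "N (iv k 1) \<le> N (?s k)" by (rule conjunct2[OF ideal[OF sx]]) (simp add: iv_def)
    then show ?thesis using N_iv by simp
  qed
  have "phi 1 \<le> 0" by (rule LIMSEQ_le_const[OF lim]) (use ge in auto)
  then show False using phi1_pos by simp
qed


definition Kk :: "nat \<Rightarrow> real" where "Kk k = real (k + 1) * 2 ^ (k + 3)"

definition good where "good k p u \<longleftrightarrow> 0 < u \<and> u \<le> p \<and> u \<le> bb / 8 \<and>
   rF u * phi 1 \<le> (1/2) ^ (k + 3) \<and> \<not> (F (2 * u) \<le> ereal (Kk k) * F u)"

lemma rF_small: "0 \<le> u \<Longrightarrow> u \<le> bb \<Longrightarrow> rF u \<le> (u / bb) * rF bb"
proof -
  assume u: "0 \<le> u" "u \<le> bb"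
  have "rF ((u / bb) * bb) \<le> (u / bb) * rF bb"
    by (rule rF_lin) (use u bb in auto)
  then show ?thesis using bb by simp
qed

lemma good_ex: "0 < p \<Longrightarrow> \<exists>u. good k p u"
proof -
  assume p: "0 < p"
  define c where "c = (1/2::real) ^ (k + 3)"
  have c: "0 < c" "c \<le> 1" unfolding c_def by (simp_all add: power_le_one)
  define D where "D = rF bb * phi 1 + 1"
  have D: "1 \<le> D" "rF bb * phi 1 \<le> D" unfolding D_def using rF_nn[of bb] bb phi_nn[of 1] by simp_all
  define u0 where "u0 = min p (min (bb / 8) (bb * c / D))"
  have u0: "0 < u0" unfolding u0_def using p bb c D by simp
  have Fu0: "F u0 > 0" using posF u0 Fnn[of u0] by (simp add: order_less_le)
  have K: "Kk k > 0" unfolding Kk_def by simp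
  obtain u where u: "0 \<le> u" "u \<le> u0" "\<not> (F (2 * u) \<le> ereal (Kk k) * F u)"
    using nd2 K u0 Fu0 unfolding delta2_zero_def by blast
  have un0: "u \<noteq> 0" using u(3) by (auto simp: F0)
  have upos: "0 < u" using u un0 by simp
  have ub: "u \<le> bb" using u(2) bb unfolding u0_def by simp
  have "rF u * phi 1 \<le> (u / bb) * rF bb * phi 1"
    using mult_right_mono[OF rF_small[OF u(1) ub] phi_nn[of 1]] by simp
  also have "\<dots> = (u / bb) * (rF bb * phi 1)" by simp
  also have "\<dots> \<le> (u / bb) * D" using D upos bb by (intro mult_left_mono) auto
  also have "\<dots> \<le> c"
  proof -
    have "u \<le> bb * c / D" using u(2) unfolding u0_def by simp
    then have "u * D \<le> bb * c" using D by (simp add: pos_le_divide_eq)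
    then show ?thesis using bb by (simp add: divide_le_eq mult.commute mult.left_commute)
  qed
  finally have sm: "rF u * phi 1 \<le> c" .
  show ?thesis unfolding good_def
    by (rule exI[of _ u]) (use upos u sm c_def u0_def in auto)
qed

primrec uu :: "nat \<Rightarrow> real" where
  "uu 0 = (SOME u. good 0 (bb / 8) u)"
| "uu (Suc k) = (SOME u. good (Suc k) (uu k) u)"

lemma uu_good: "good k (if k = 0 then bb / 8 else uu (k - 1)) (uu k)"
proof (induction k)
  case 0
  have "0 < bb / 8" using bb by simp
  from someI_ex[OF good_ex[OF this]] show ?case by simp
next
  case (Suc k)
  then have "0 < uu k" unfolding good_def by simp
  from someI_ex[OF good_ex[OF this]] show ?case by simp
qed

lemma uu_pos: "0 < uu k" and uu_le: "uu k \<le> bb / 8"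
  and uu_small: "rF (uu k) * phi 1 \<le> (1/2) ^ (k + 3)"
  and uu_jump: "\<not> (F (2 * uu k) \<le> ereal (Kk k) * F (uu k))"
  using uu_good[of k] unfolding good_def by auto

lemma uu_dec: "uu (Suc k) \<le> uu k"
  using uu_good[of "Suc k"] unfolding good_def by simp

lemma uu_anti: "k \<le> k' \<Longrightarrow> uu k' \<le> uu k"
proof (induction k' rule: dec_induct)
  case (step n)
  then show ?case using uu_dec[of n] by linarith
qed simp

lemma uu_fin: "F (uu k) \<noteq> \<infinity>"
  using fin_le[of "uu k" bb] uu_pos[of k] uu_le[of k] bb by simp

lemma rFuu_pos: "0 < rF (uu k)" using rF_pos[OF uu_pos uu_fin] .


definition mm where "mm k = (LEAST m. (1/2) ^ (k + 3) < rF (uu k) * phi m)"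

lemma mm_prop: "1 \<le> mm k \<and> rF (uu k) * phi (mm k) \<le> (1/2) ^ (k + 2)"
proof -
  define c where "c = (1/2::real) ^ (k + 3)"
  have r: "0 < rF (uu k)" by (rule rFuu_pos)
  obtain m where m: "c / rF (uu k) < phi m" using phi_unb by blast
  have ex: "\<exists>m. c < rF (uu k) * phi m"
    using m r by (intro exI[of _ m]) (simp add: pos_divide_less_eq mult.commute)
  have L: "c < rF (uu k) * phi (mm k)" unfolding mm_def c_def[symmetric] by (rule LeastI_ex[OF ex])
  have c0: "0 < c" unfolding c_def by simp
  have nz: "mm k \<noteq> 0" using L c0 phi0 by (cases "mm k") auto
  then obtain m' where m': "mm k = Suc m'" by (cases "mm k") auto
  have "m' < mm k" using m' by simp
  then have "\<not> c < rF (uu k) * phi m'" unfolding mm_def c_def by (rule not_less_Least)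
  then have a: "rF (uu k) * phi m' \<le> c" by simp
  have "rF (uu k) * phi (mm k) \<le> rF (uu k) * (phi m' + phi 1)"
    using phi_suc[of m'] r m' by (simp add: mult_left_mono)
  also have "\<dots> \<le> c + c" using a uu_small[of k] unfolding c_def by (simp add: algebra_simps)
  also have "\<dots> = (1/2) ^ (k + 2)" unfolding c_def by (simp add: power_add power_one_over)
  finally show ?thesis using nz by simp
qed

lemma mm_low: "(1/2) ^ (k + 3) < rF (uu k) * phi (mm k)"
proof -
  have r: "0 < rF (uu k)" by (rule rFuu_pos)
  obtain m where m: "(1/2) ^ (k + 3) / rF (uu k) < phi m" using phi_unb by blast
  have ex: "\<exists>m. (1/2) ^ (k + 3) < rF (uu k) * phi m"
    using m r by (intro exI[of _ m]) (simp add: pos_divide_less_eq mult.commute)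
  show ?thesis unfolding mm_def by (rule LeastI_ex[OF ex])
qed

primrec SS :: "nat \<Rightarrow> nat" where
  "SS 0 = 0"
| "SS (Suc k) = SS k + mm k"

lemma SS_sm: "strict_mono SS"
  unfolding strict_mono_Suc_iff using mm_prop by (simp add: Suc_le_eq)

definition ff where "ff n = uu (idx SS n)"

lemma ff_pos: "0 < ff n" and ff_le: "ff n \<le> bb / 8"
  unfolding ff_def using uu_pos uu_le by auto

lemma ff_anti: "n \<le> n' \<Longrightarrow> ff n' \<le> ff n"
  unfolding ff_def by (rule uu_anti[OF idx_mono[OF SS_sm]]) auto

lemma ff_block: "SS k \<le> n \<Longrightarrow> n < SS (Suc k) \<Longrightarrow> ff n = uu k"
  unfolding ff_def using idx_unique[OF SS_sm] by simp

lemma F_in_ff: "F_in X F ff"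
proof -
  define P where "P K n = (if n < SS K then rF (ff n) else 0)" for K n
  have P0: "P 0 = (\<lambda>n. 0)" unfolding P_def by (simp add: fun_eq_iff)
  have Pin: "P K \<in> X" for K by (rule FS[of "SS K"]) (simp add: P_def)
  have PS: "P (Suc K) = (\<lambda>n. P K n + rF (uu K) * iv (SS K) (mm K) n)" for K
  proof
    fix n
    show "P (Suc K) n = P K n + rF (uu K) * iv (SS K) (mm K) n"
      using ff_block[of K n] by (auto simp: P_def iv_def)
  qed
  have PN: "N (P K) \<le> 1/2 - (1/2) ^ (K + 1)" for K
  proof (induction K)
    case 0 then show ?case using P0 N_zero_iff[OF zero_in] by simp
  next
    case (Suc K)
    have "N (P (Suc K)) \<le> N (P K) + N (\<lambda>n. rF (uu K) * iv (SS K) (mm K) n)"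
      unfolding PS by (rule N_tri[OF Pin smul_in[OF iv_in]])
    also have "\<dots> = N (P K) + rF (uu K) * phi (mm K)"
      using N_civ rFuu_pos[of K] by simp
    also have "\<dots> \<le> 1/2 - (1/2) ^ (K + 1) + (1/2) ^ (K + 2)" using Suc mm_prop[of K] by simp
    also have "\<dots> = 1/2 - (1/2) ^ (Suc K + 1)" by simp
    finally show ?case .
  qed
  have lim: "Fcomp F ff \<in> X \<and> (\<lambda>K. N (P K)) \<longlonglongrightarrow> N (Fcomp F ff)"
  proof (rule fat_use[where B="1/2"])
    show "0 \<le> P k n" for k n unfolding P_def using rF_nn[of "ff n"] ff_pos[of n] by simp
    show "P k n \<le> P (Suc k) n" for k n
      unfolding P_def using rF_nn[of "ff n"] ff_pos[of n] strict_monoD[OF SS_sm, of k "Suc k"] by auto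
    show "(\<lambda>k. P k n) \<longlonglongrightarrow> Fcomp F ff n" for n
    proof (rule ev_lim[of "Suc n"])
      fix k assume "Suc n \<le> k"
      then have "n < SS k" using sm_ge[OF SS_sm, of k] by simp
      then show "P k n = Fcomp F ff n" unfolding P_def Fcomp_eq using ff_pos[of n] by simp
    qed
    show "P k \<in> X" for k by (rule Pin)
    show "N (P k) \<le> 1/2" for k
    proof -
      have "0 < (1/2::real) ^ (k + 1)" by simp
      then show ?thesis using PN[of k] by linarith
    qed
  qed
  have fin: "F \<bar>ff n\<bar> \<noteq> \<infinity>" for n
    using fin_le[of "ff n" bb] ff_pos[of n] ff_le[of n] bb by simp
  show ?thesis unfolding F_in_def using lim fin by blast
qed

lemma not_F_in_2ff: "\<not> F_in X F (\<lambda>n. 2 * ff n)"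
proof
  assume a: "F_in X F (\<lambda>n. 2 * ff n)"
  let ?G = "Fcomp F (\<lambda>n. 2 * ff n)"
  have Gx: "?G \<in> X" using a unfolding F_in_def by blast
  have big: "real (k + 1) < N ?G" for k
  proof -
    have ssk: "SS k < SS (Suc k)" using strict_monoD[OF SS_sm, of k "Suc k"] by simp
    have fk: "ff (SS k) = uu k" using ff_block[of k "SS k"] ssk by simp
    have fin2: "F (2 * uu k) \<noteq> \<infinity>" using a fk unfolding F_in_def
      by (metis abs_of_pos mult_pos_pos uu_pos zero_less_numeral)
    have e1: "F (2 * uu k) = ereal (rF (2 * uu k))" by (rule F_real) (use uu_pos[of k] fin2 in auto)
    have e2: "F (uu k) = ereal (rF (uu k))" by (rule F_real) (use uu_pos[of k] uu_fin in auto)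
    have jump: "Kk k * rF (uu k) < rF (2 * uu k)" using uu_jump[of k] unfolding e1 e2 by simp
    have le: "\<bar>rF (2 * uu k) * iv (SS k) (mm k) n\<bar> \<le> \<bar>?G n\<bar>" for n
    proof (cases "SS k \<le> n \<and> n < SS k + mm k")
      case True
      then have "ff n = uu k" using ff_block[of k n] by simp
      then show ?thesis using True rF_nn[of "2 * uu k"] uu_pos[of k]
        by (simp add: iv_def Fcomp_eq)
    next
      case False
      then have "iv (SS k) (mm k) n = 0" by (auto simp: iv_def)
      then show ?thesis using Fcomp_nn[of "\<lambda>n. 2 * ff n" n] by simp
    qed
    have "N (\<lambda>n. rF (2 * uu k) * iv (SS k) (mm k) n) \<le> N ?G"
      using ideal[OF Gx le] by blast
    then have A: "rF (2 * uu k) * phi (mm k) \<le> N ?G"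
      using N_civ rF_nn[of "2 * uu k"] uu_pos[of k] by simp
    have h: "(2::real) ^ (k + 3) * (1/2) ^ (k + 3) = 1" by (simp add: power_mult_distrib[symmetric])
    have "real (k + 1) = Kk k * (1/2) ^ (k + 3)" unfolding Kk_def using h by simp
    also have "\<dots> < Kk k * (rF (uu k) * phi (mm k))"
      using mm_low[of k] by (intro mult_strict_left_mono) (simp_all add: Kk_def)
    also have "\<dots> = (Kk k * rF (uu k)) * phi (mm k)" by simp
    also have "\<dots> \<le> rF (2 * uu k) * phi (mm k)"
      using jump phi_nn[of "mm k"] by (intro mult_right_mono) simp_all
    finally show ?thesis using A by simp
  qed
  obtain k :: nat where "N ?G \<le> real k" using real_arch_simple by blast
  then show False using big[of k] by simp
qed

definition W where "W = cesaro ff"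

lemma W_ge: "ff n \<le> W n"
proof -
  have "(\<Sum>i\<le>n. ff n) \<le> (\<Sum>i\<le>n. ff i)" by (rule sum_mono) (simp add: ff_anti)
  then have "real (Suc n) * ff n \<le> (\<Sum>i\<le>n. ff i)" by simp
  then show ?thesis unfolding W_def cesaro_def by (simp add: pos_le_divide_eq mult.commute)
qed

lemma W_le: "W n \<le> bb / 8"
proof -
  have "(\<Sum>i\<le>n. ff i) \<le> (\<Sum>i\<le>n. bb / 8)" by (rule sum_mono) (rule ff_le)
  then have "(\<Sum>i\<le>n. ff i) \<le> real (Suc n) * (bb / 8)" by simp
  then show ?thesis unfolding W_def cesaro_def by (simp add: pos_divide_le_eq mult.commute)
qed

lemma W_nn: "0 \<le> W n" using W_ge[of n] ff_pos[of n] by simp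


lemma in_class:
  assumes v: "F_in X F v" shows "v \<in> CL_class X N F"
proof -
  define r where "r = max 1 (N (Fcomp F v))"
  have r: "1 \<le> r" "N (Fcomp F v) \<le> r" unfolding r_def by auto
  have vx: "Fcomp F v \<in> X" and fin: "\<And>n. F \<bar>v n\<bar> \<noteq> \<infinity>" using v unfolding F_in_def by auto
  have le: "\<bar>Fcomp F (\<lambda>n. v n / r) n\<bar> \<le> \<bar>(1 / r) * Fcomp F v n\<bar>" for n
  proof -
    have "rF ((1 / r) * \<bar>v n\<bar>) \<le> (1 / r) * rF \<bar>v n\<bar>"
      by (rule rF_lin) (use r fin in auto)
    moreover have "\<bar>v n / r\<bar> = (1 / r) * \<bar>v n\<bar>" using r by (simp add: abs_divide)
    ultimately show ?thesis using rF_nn[of "\<bar>v n / r\<bar>"] rF_nn[of "\<bar>v n\<bar>"] r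
      by (simp add: Fcomp_eq)
  qed
  have i1: "Fcomp F (\<lambda>n. v n / r) \<in> X \<and> N (Fcomp F (\<lambda>n. v n / r)) \<le> N (\<lambda>n. (1 / r) * Fcomp F v n)"
    by (rule ideal[OF smul_in[OF vx] le])
  have "N (\<lambda>n. (1 / r) * Fcomp F v n) = \<bar>1 / r\<bar> * N (Fcomp F v)" by (rule N_smul[OF vx])
  also have "\<dots> = (1 / r) * N (Fcomp F v)" using r by simp
  also have "\<dots> \<le> 1" using r N_nonneg[OF vx] by (simp add: divide_le_eq)
  finally have n1: "N (Fcomp F (\<lambda>n. v n / r)) \<le> 1" using i1 by simp
  have fin2: "F \<bar>v n / r\<bar> \<noteq> \<infinity>" for n
  proof (rule fin_le[of _ "\<bar>v n\<bar>"])
    have "\<bar>v n\<bar> * 1 \<le> \<bar>v n\<bar> * r" by (rule mult_left_mono) (use r in auto)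
    then show "\<bar>v n / r\<bar> \<le> \<bar>v n\<bar>" using r by (simp add: abs_divide divide_le_eq)
  qed (use fin in auto)
  have "CL_admissible X N F v r" unfolding CL_admissible_def F_in_def using r i1 n1 fin2 by auto
  then have "v \<in> CL_space X N F" unfolding CL_space_def by blast
  then show ?thesis unfolding CL_class_def using v by blast
qed

lemma closure_use: "F_in X F v \<Longrightarrow> F_in X F (cesaro (\<lambda>n. \<bar>v n\<bar>))"
  using clo in_class unfolding CL_class_closed_under_cesaro_def CL_class_def by blast

lemma W_eq: "cesaro (\<lambda>n. \<bar>ff n\<bar>) = W"
proof -
  have "(\<lambda>n. \<bar>ff n\<bar>) = ff" using ff_pos by (simp add: fun_eq_iff less_imp_le)
  then show ?thesis unfolding W_def by simp
qed

definition Aset where "Aset = {l. 0 < l \<and> F_in X F (\<lambda>n. W n / l)}"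
definition ss where "ss = Inf Aset"

lemma W_up: "0 < l \<Longrightarrow> l \<le> l' \<Longrightarrow> F_in X F (\<lambda>n. W n / l) \<Longrightarrow> F_in X F (\<lambda>n. W n / l')"
proof -
  assume a: "0 < l" "l \<le> l'" "F_in X F (\<lambda>n. W n / l)"
  have "\<bar>W n / l'\<bar> \<le> \<bar>W n / l\<bar>" for n
  proof -
    have "W n / l' \<le> W n / l" by (rule divide_left_mono) (use a W_nn[of n] in auto)
    moreover have "0 \<le> W n / l'" using a W_nn[of n] by simp
    ultimately show ?thesis using abs_of_nonneg[of "W n / l'"] abs_of_nonneg[of "W n / l"] by linarith
  qed
  from M1[OF this a(3)] show ?thesis by blast
qed

lemma one_in: "1 \<in> Aset"
  unfolding Aset_def using closure_use[OF F_in_ff] W_eq by simp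

lemma half_notin: "\<not> F_in X F (\<lambda>n. W n / (1/2))"
proof
  assume a: "F_in X F (\<lambda>n. W n / (1/2))"
  have "\<bar>2 * ff n\<bar> \<le> \<bar>W n / (1/2)\<bar>" for n using W_ge[of n] ff_pos[of n] by simp
  from M1[OF this a] have "F_in X F (\<lambda>n. 2 * ff n)" by blast
  then show False using not_F_in_2ff by simp
qed

lemma Aset_gt: "l \<in> Aset \<Longrightarrow> 1/2 < l"
proof (rule ccontr)
  assume a: "l \<in> Aset" "\<not> 1/2 < l"
  then have "F_in X F (\<lambda>n. W n / (1/2))" using W_up[of l "1/2"] unfolding Aset_def by auto
  then show False using half_notin by simp
qed

lemma ss_bounds: "1/2 \<le> ss" "ss \<le> 1"
proof -
  have ne: "Aset \<noteq> {}" using one_in by blast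
  show "1/2 \<le> ss" unfolding ss_def by (rule cInf_greatest[OF ne]) (use Aset_gt in force)
  have bd: "bdd_below Aset" unfolding bdd_below_def using Aset_gt by (meson less_imp_le)
  show "ss \<le> 1" unfolding ss_def by (rule cInf_lower[OF one_in bd])
qed

lemma ss_above: "ss < l \<Longrightarrow> F_in X F (\<lambda>n. W n / l)"
proof -
  assume a: "ss < l"
  have ne: "Aset \<noteq> {}" using one_in by blast
  obtain l' where l': "l' \<in> Aset" "l' < l" using a unfolding ss_def by (meson cInf_lessD ne)
  then show ?thesis using W_up[of l' l] unfolding Aset_def by auto
qed

lemma ss_below: "0 < l \<Longrightarrow> l < ss \<Longrightarrow> \<not> F_in X F (\<lambda>n. W n / l)"
proof
  assume a: "0 < l" "l < ss" "F_in X F (\<lambda>n. W n / l)"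
  then have "l \<in> Aset" unfolding Aset_def by simp
  moreover have "bdd_below Aset" unfolding bdd_below_def using Aset_gt by (meson less_imp_le)
  ultimately have "ss \<le> l" unfolding ss_def by (rule cInf_lower)
  then show False using a by simp
qed


lemma sum_block: "(\<Sum>i\<le>n. (if i < L then c else 0)) = c * real (min (Suc n) L)"
proof (induction n)
  case 0 then show ?case by (cases L) auto
next
  case (Suc n)
  have "(\<Sum>i\<le>Suc n. (if i < L then c else 0)) = c * real (min (Suc n) L) + (if Suc n < L then c else 0)"
    using Suc by simp
  also have "\<dots> = c * real (min (Suc (Suc n)) L)"
    by (cases "Suc n < L") (auto simp: min_def algebra_simps)
  finally show ?case .
qed

lemma hlem:
  assumes c: "0 \<le> c" and cL: "c / (real L + 1) \<le> bb"
  shows "F_in X F (\<lambda>n. if L \<le> n then c / (real n + 1) else 0)"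
proof -
  define L' where "L' = nat \<lceil>c / bb\<rceil>"
  have L': "c \<le> bb * real L'"
  proof -
    have "c / bb \<le> real L'" unfolding L'_def by linarith
    then show ?thesis using bb by (simp add: divide_le_eq mult.commute)
  qed
  define g where "g n = (if n < L' then bb else 0)" for n
  have gin: "F_in X F g"
  proof -
    have fin: "F \<bar>g n\<bar> \<noteq> \<infinity>" for n unfolding g_def using bb F0 by auto
    have "Fcomp F g \<in> X" by (rule FS[of L']) (simp add: Fcomp_eq g_def rF_def F0)
    then show ?thesis unfolding F_in_def using fin by blast
  qed
  have cg: "F_in X F (cesaro (\<lambda>n. \<bar>g n\<bar>))" by (rule closure_use[OF gin])
  have ag: "(\<lambda>n. \<bar>g n\<bar>) = g" unfolding g_def using bb by (simp add: fun_eq_iff)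
  have le: "\<bar>(if L \<le> n then c / (real n + 1) else 0)\<bar> \<le> \<bar>cesaro (\<lambda>n. \<bar>g n\<bar>) n\<bar>" for n
  proof (cases "L \<le> n")
    case False then show ?thesis by simp
  next
    case True
    have cs: "cesaro g n = bb * real (min (Suc n) L') / (real n + 1)"
      unfolding cesaro_def g_def sum_block by simp
    have cn: "c / (real n + 1) \<le> bb * real (min (Suc n) L') / (real n + 1)"
    proof (cases "Suc n \<le> L'")
      case True
      have "c / (real n + 1) \<le> c / (real L + 1)" using \<open>L \<le> n\<close> c by (intro divide_left_mono) auto
      also have "\<dots> \<le> bb" by (rule cL)
      also have "\<dots> = bb * real (min (Suc n) L') / (real n + 1)" using True by (simp add: min_def add.commute)
      finally show ?thesis .
    next
      case False
      then have "min (Suc n) L' = L'" by simp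
      then show ?thesis using L' by (simp add: divide_right_mono)
    qed
    have c0: "0 \<le> c / (real n + 1)" using c by simp
    have e: "(if L \<le> n then c / (real n + 1) else 0) = c / (real n + 1)" using True by simp
    have e2: "cesaro (\<lambda>n. \<bar>g n\<bar>) n = bb * real (min (Suc n) L') / (real n + 1)" using ag cs by simp
    have nn: "0 \<le> bb * real (min (Suc n) L') / (real n + 1)" using bb by simp
    show ?thesis unfolding e e2 using abs_of_nonneg[OF c0] abs_of_nonneg[OF nn] cn by linarith
  qed
  from M1[OF le cg] show ?thesis by blast
qed

lemma sum_split_M:
  "(\<Sum>i\<le>n. ff i) \<le> (\<Sum>i\<le>n. (if M \<le> i then ff i else 0)) + (\<Sum>i<M. ff i)"
proof -
  have e: "(\<Sum>i\<le>n. ff i) = (\<Sum>i\<le>n. (if M \<le> i then ff i else 0)) + (\<Sum>i\<le>n. (if i < M then ff i else 0))"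
    by (simp add: sum.distrib[symmetric]) (rule sum.cong, auto)
  have "(\<Sum>i\<le>n. (if i < M then ff i else 0)) = (\<Sum>i\<in>{..n} \<inter> {..<M}. ff i)"
    by (simp add: sum.inter_restrict)
  also have "\<dots> \<le> (\<Sum>i<M. ff i)"
    by (rule sum_mono2) (auto simp: less_imp_le[OF ff_pos])
  finally show ?thesis using e by simp
qed

lemma tailinv:
  assumes mu: "0 < \<mu>" "\<mu> < ss"
  shows "\<not> F_in X F (\<lambda>n. cesaro (\<lambda>i. if M \<le> i then ff i else 0) n / \<mu>)"
proof
  let ?T = "\<lambda>n. cesaro (\<lambda>i. if M \<le> i then ff i else 0) n"
  let ?A = "\<lambda>n. ?T n / \<mu>"
  assume FA: "F_in X F ?A"
  define l where "l = (\<mu> + ss) / 2"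
  have l: "\<mu> < l" "l < ss" "0 < l" "1/4 \<le> l" using mu ss_bounds unfolding l_def by auto
  define th where "th = \<mu> / l"
  have th: "0 < th" "th < 1" using l mu unfolding th_def by auto
  define m where "m = (\<Sum>i<M. ff i)"
  have m: "0 \<le> m" unfolding m_def by (rule sum_nonneg) (simp add: less_imp_le[OF ff_pos])
  define c where "c = m / ((1 - th) * l)"
  have c: "0 \<le> c" unfolding c_def using m th l by simp
  define L where "L = nat \<lceil>c / bb\<rceil>"
  have cL: "c / (real L + 1) \<le> bb"
  proof -
    have "c / bb \<le> real L" unfolding L_def by linarith
    then have "c \<le> bb * real L" using bb by (simp add: divide_le_eq mult.commute)
    also have "\<dots> \<le> bb * (real L + 1)" using bb by simp
    finally show ?thesis using bb by (simp add: divide_le_eq mult.commute)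
  qed
  let ?B = "\<lambda>n. if L \<le> n then c / (real n + 1) else 0"
  have FB: "F_in X F ?B" by (rule hlem[OF c cL])
  have Tnn: "0 \<le> ?T n" for n by (rule ces_nn) (simp add: less_imp_le[OF ff_pos])
  have finA: "F (?A n) \<noteq> \<infinity>" for n
  proof -
    have "F \<bar>?A n\<bar> \<noteq> \<infinity>" using FA unfolding F_in_def by blast
    moreover have "\<bar>?A n\<bar> = ?A n" using Tnn[of n] mu by simp
    ultimately show ?thesis by simp
  qed
  have finB: "F (?B n) \<noteq> \<infinity>" for n
  proof -
    have "F \<bar>?B n\<bar> \<noteq> \<infinity>" using FB unfolding F_in_def by blast
    moreover have "\<bar>?B n\<bar> = ?B n" using c by simp
    ultimately show ?thesis by simp
  qed
  have FAx: "Fcomp F ?A \<in> X" using FA unfolding F_in_def by blast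
  have FBx: "Fcomp F ?B \<in> X" using FB unfolding F_in_def by blast
  let ?Z = "\<lambda>n. if n < L then Fcomp F (\<lambda>n. W n / l) n else 0"
  have Zx: "?Z \<in> X" by (rule FS[of L]) simp
  let ?R = "\<lambda>n. (\<lambda>n. th * Fcomp F ?A n) n + (\<lambda>n. (1 - th) * Fcomp F ?B n) n"
  have Rx: "?R \<in> X" by (rule add_in[OF smul_in[OF FAx] smul_in[OF FBx]])
  have RZx: "(\<lambda>n. ?R n + ?Z n) \<in> X" by (rule add_in[OF Rx Zx])
  have Wl: "W n / l \<le> bb" for n
  proof -
    have "bb * (1/4) \<le> bb * l" by (rule mult_left_mono) (use l bb in auto)
    then have "W n \<le> bb * l" using W_le[of n] bb by linarith
    then show ?thesis using l(3) by (simp add: pos_divide_le_eq)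
  qed
  have finW: "F \<bar>W n / l\<bar> \<noteq> \<infinity>" for n
    using fin_le[of "\<bar>W n / l\<bar>" bb] Wl[of n] W_nn[of n] l bb by simp
  have le: "\<bar>Fcomp F (\<lambda>n. W n / l) n\<bar> \<le> \<bar>?R n + ?Z n\<bar>" for n
  proof (cases "n < L")
    case True
    have "0 \<le> ?R n" using th Fcomp_nn[of ?A n] Fcomp_nn[of ?B n] by simp
    then show ?thesis using True Fcomp_nn[of "\<lambda>n. W n / l" n] by simp
  next
    case False
    have Bn: "?B n = c / (real n + 1)" using False by simp
    have Wn: "W n \<le> ?T n + m / (real n + 1)"
    proof -
      have "W n = (\<Sum>i\<le>n. ff i) / (real n + 1)" unfolding W_def cesaro_def by simp
      also have "\<dots> \<le> ((\<Sum>i\<le>n. (if M \<le> i then ff i else 0)) + m) / (real n + 1)"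
        unfolding m_def by (rule divide_right_mono[OF sum_split_M]) simp
      also have "\<dots> = ?T n + m / (real n + 1)" unfolding cesaro_def by (simp add: add_divide_distrib)
      finally show ?thesis .
    qed
    have key: "W n / l \<le> th * ?A n + (1 - th) * ?B n"
    proof -
      have e1: "th * ?A n = ?T n / l" unfolding th_def using mu l by simp
      have e2: "(1 - th) * ?B n = m / (real n + 1) / l"
      proof -
        have ne: "1 - th \<noteq> 0" "l \<noteq> 0" using th l by auto
        have "(1 - th) * c = m / l" unfolding c_def using ne by simp
        then have "(1 - th) * (c / (real n + 1)) = m / l / (real n + 1)" by (simp add: times_divide_eq_right[symmetric])
        then have "(1 - th) * (c / (real n + 1)) = m / (real n + 1) / l" by (simp add: divide_divide_eq_left mult.commute)
        then show ?thesis using Bn by simp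
      qed
      have "W n / l \<le> (?T n + m / (real n + 1)) / l" by (rule divide_right_mono[OF Wn]) (use l in simp)
      also have "\<dots> = ?T n / l + m / (real n + 1) / l" by (simp add: add_divide_distrib)
      finally show ?thesis using e1 e2 by linarith
    qed
    have An: "0 \<le> ?A n" using Tnn[of n] mu by simp
    have Bnn: "0 \<le> ?B n" using c by simp
    have cv: "F (th * ?A n + (1 - th) * ?B n) \<noteq> \<infinity> \<and>
       rF (th * ?A n + (1 - th) * ?B n) \<le> th * rF (?A n) + (1 - th) * rF (?B n)"
      by (rule Fconv_real) (use An Bnn th finA finB in auto)
    have "rF (W n / l) \<le> rF (th * ?A n + (1 - th) * ?B n)"
      by (rule rF_mono) (use key W_nn[of n] l cv in auto)
    also have "\<dots> \<le> th * rF (?A n) + (1 - th) * rF (?B n)" using cv by blast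
    finally have "rF (W n / l) \<le> th * rF (?A n) + (1 - th) * rF (?B n)" .
    moreover have Wnn: "0 \<le> W n / l" using W_nn[of n] l by simp
    moreover have "Fcomp F ?A n = rF (?A n)" by (simp only: Fcomp_eq abs_of_nonneg[OF An])
    moreover have "Fcomp F ?B n = rF (?B n)" by (simp only: Fcomp_eq abs_of_nonneg[OF Bnn])
    moreover have "Fcomp F (\<lambda>n. W n / l) n = rF (W n / l)" by (simp only: Fcomp_eq abs_of_nonneg[OF Wnn])
    moreover have "0 \<le> rF (W n / l)" using W_nn[of n] l by (intro rF_nn) simp
    ultimately show ?thesis using False by simp
  qed
  have "Fcomp F (\<lambda>n. W n / l) \<in> X" using ideal[OF RZx le] by blast
  then have "F_in X F (\<lambda>n. W n / l)" unfolding F_in_def using finW by blast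
  then show False using ss_below[OF l(3) l(2)] by simp
qed


definition eps :: "nat \<Rightarrow> real" where "eps k = 1 / (real k + 2)"
definition al where "al k = ss * (1 + eps k)"
definition be where "be k = ss * (1 - eps k)"

lemma eps: "0 < eps k" "eps k \<le> 1/2" unfolding eps_def by auto
lemma eps_anti: "k \<le> k' \<Longrightarrow> eps k' \<le> eps k"
  unfolding eps_def by (intro divide_left_mono) auto
lemma ss_pos: "0 < ss" using ss_bounds by simp
lemma al: "ss < al k" "0 < al k" unfolding al_def using eps[of k] ss_pos by auto
lemma be: "0 < be k" "be k < ss" unfolding be_def using eps[of k] ss_pos by auto
lemma al_anti: "k \<le> k' \<Longrightarrow> al k' \<le> al k"
  unfolding al_def using eps_anti ss_pos by (simp add: mult_left_mono)

definition wk where "wk k = Fcomp F (\<lambda>n. W n / al k)"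
lemma wk_in: "wk k \<in> X" using ss_above[OF al(1)] unfolding wk_def F_in_def by blast
lemma wk_nn: "0 \<le> wk k n" unfolding wk_def by (rule Fcomp_nn)

definition tlM :: "nat \<Rightarrow> (nat \<Rightarrow> real) \<Rightarrow> nat \<Rightarrow> real" where
  "tlM M w = (\<lambda>n. if M \<le> n then w n else 0)"

lemma tlM_in: "w \<in> X \<Longrightarrow> tlM M w \<in> X \<and> N (tlM M w) \<le> N w"
  by (rule ideal) (auto simp: tlM_def)

lemma Tth_ex: "\<exists>M. N (tlM M (wk k)) < (1/2) ^ (k + 1)"
proof -
  have lim: "(\<lambda>M. N (tlM M (wk k))) \<longlonglongrightarrow> 0"
  proof (rule oc_use[OF wk_in])
    show "0 \<le> tlM M (wk k) n" for M n unfolding tlM_def using wk_nn by simp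
    show "tlM M (wk k) n \<le> \<bar>wk k n\<bar>" for M n unfolding tlM_def using wk_nn[of k n] by simp
    show "tlM (Suc M) (wk k) n \<le> tlM M (wk k) n" for M n unfolding tlM_def using wk_nn[of k n] by simp
    show "(\<lambda>M. tlM M (wk k) n) \<longlonglongrightarrow> 0" for n by (rule ev_lim[of "Suc n"]) (simp add: tlM_def)
  qed
  have "0 < (1/2::real) ^ (k + 1)" by simp
  from order_tendstoD(2)[OF lim this] show ?thesis by (auto simp: eventually_sequentially)
qed

definition Tth where "Tth k = (SOME M. N (tlM M (wk k)) < (1/2) ^ (k + 1))"

lemma Tth: "Tth k \<le> M \<Longrightarrow> N (tlM M (wk k)) \<le> (1/2) ^ (k + 1)"
proof -
  assume a: "Tth k \<le> M"
  have t: "N (tlM (Tth k) (wk k)) < (1/2) ^ (k + 1)" unfolding Tth_def by (rule someI_ex[OF Tth_ex])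
  have tin: "tlM (Tth k) (wk k) \<in> X" using tlM_in[OF wk_in] by blast
  have "N (tlM M (wk k)) \<le> N (tlM (Tth k) (wk k))"
    by (rule conjunct2[OF ideal[OF tin]]) (use a wk_nn[of k] in \<open>auto simp: tlM_def\<close>)
  then show ?thesis using t by simp
qed

definition blk where "blk m M = (\<lambda>i. if m \<le> i \<and> i < M then ff i else 0)"

definition Pk where "Pk k m M \<longleftrightarrow> F_in X F (\<lambda>n. cesaro (blk m M) n / be k) \<and>
   N (Fcomp F (\<lambda>n. cesaro (blk m M) n / be k)) < real k"

lemma blk_nn: "0 \<le> blk m M i" unfolding blk_def using ff_pos[of i] by simp

lemma ces_mono_loc: "(\<And>i. i \<le> n \<Longrightarrow> x i \<le> y i) \<Longrightarrow> cesaro x n \<le> cesaro y n"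
  unfolding cesaro_def by (intro divide_right_mono sum_mono) auto

lemma Pk_mono: "M \<le> M' \<Longrightarrow> Pk k m M' \<Longrightarrow> Pk k m M"
proof -
  assume a: "M \<le> M'" "Pk k m M'"
  have le: "\<bar>cesaro (blk m M) n / be k\<bar> \<le> \<bar>cesaro (blk m M') n / be k\<bar>" for n
  proof -
    have c1: "cesaro (blk m M) n \<le> cesaro (blk m M') n"
      by (rule ces_mono) (use a(1) ff_pos in \<open>auto simp: blk_def less_imp_le\<close>)
    have c0: "0 \<le> cesaro (blk m M) n" by (rule ces_nn[OF blk_nn])
    have "cesaro (blk m M) n / be k \<le> cesaro (blk m M') n / be k"
      by (rule divide_right_mono[OF c1]) (use be[of k] in simp)
    moreover have "0 \<le> cesaro (blk m M) n / be k" using c0 be[of k] by simp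
    ultimately show ?thesis by linarith
  qed
  have "F_in X F (\<lambda>n. cesaro (blk m M') n / be k)" using a(2) unfolding Pk_def by blast
  from M1[OF le this] a(2) show ?thesis unfolding Pk_def by linarith
qed

lemma L_ex: "\<exists>M. \<not> Pk k m M"
proof (rule ccontr)
  assume "\<not> ?thesis"
  then have P: "Pk k m M" for M by blast
  let ?tail = "\<lambda>i. if m \<le> i then ff i else 0"
  let ?s = "\<lambda>M. Fcomp F (\<lambda>n. cesaro (blk m M) n / be k)"
  let ?x = "Fcomp F (\<lambda>n. cesaro ?tail n / be k)"
  have bk: "0 < be k" by (rule be)
  have fat_res: "?x \<in> X \<and> (\<lambda>M. N (?s M)) \<longlonglongrightarrow> N ?x"
  proof (rule fat_use[where B="real k"])
    show "0 \<le> ?s M n" for M n by (rule Fcomp_nn)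
    show "?s M n \<le> ?s (Suc M) n" for M n
    proof -
      have "Pk k m M" by (rule Pk_mono[OF _ P[of "Suc M"]]) simp
      have le: "\<bar>cesaro (blk m M) n / be k\<bar> \<le> \<bar>cesaro (blk m (Suc M)) n / be k\<bar>"
      proof -
        have c1: "cesaro (blk m M) n \<le> cesaro (blk m (Suc M)) n"
          by (rule ces_mono) (use ff_pos in \<open>auto simp: blk_def less_imp_le\<close>)
        have c0: "0 \<le> cesaro (blk m M) n" by (rule ces_nn[OF blk_nn])
        have "cesaro (blk m M) n / be k \<le> cesaro (blk m (Suc M)) n / be k"
          by (rule divide_right_mono[OF c1]) (use bk in simp)
        moreover have "0 \<le> cesaro (blk m M) n / be k" using c0 bk by simp
        ultimately show ?thesis by linarith
      qed
      have fin: "F \<bar>cesaro (blk m (Suc M)) n / be k\<bar> \<noteq> \<infinity>" using P[of "Suc M"] unfolding Pk_def F_in_def by blast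
      have "F \<bar>cesaro (blk m M) n / be k\<bar> \<le> F \<bar>cesaro (blk m (Suc M)) n / be k\<bar>"
        by (rule Fmono) (use le in auto)
      then show ?thesis unfolding Fcomp_def using ereal_le_real[OF Fnn _ fin] by simp
    qed
    show "(\<lambda>M. ?s M n) \<longlonglongrightarrow> ?x n" for n
    proof (rule ev_lim[of "Suc n"])
      fix M assume "Suc n \<le> M"
      then have "cesaro (blk m M) n = cesaro ?tail n" by (intro ces_local) (auto simp: blk_def)
      then show "?s M n = ?x n" by (simp add: Fcomp_def)
    qed
    show "?s M \<in> X" for M using P[of M] unfolding Pk_def F_in_def by blast
    show "N (?s M) \<le> real k" for M using P[of M] unfolding Pk_def by simp
  qed
  have fin: "F \<bar>cesaro ?tail n / be k\<bar> \<noteq> \<infinity>" for n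
  proof (rule fin_le[of _ bb])
    have t0: "0 \<le> cesaro ?tail n" by (rule ces_nn) (simp add: less_imp_le[OF ff_pos])
    have "cesaro ?tail n \<le> W n" unfolding W_def by (rule ces_mono) (simp add: less_imp_le[OF ff_pos])
    then have t1: "cesaro ?tail n \<le> bb / 8" using W_le[of n] by simp
    have "(1/2) * (1/2) \<le> ss * (1 - eps k)"
      by (rule mult_mono) (use eps[of k] ss_bounds in auto)
    then have "1/4 \<le> be k" unfolding be_def by simp
    then have "bb * (1/4) \<le> bb * be k" using bb by (intro mult_left_mono) auto
    then have "cesaro ?tail n \<le> bb * be k" using t1 bb by linarith
    then show "\<bar>cesaro ?tail n / be k\<bar> \<le> bb" using t0 bk by (simp add: pos_divide_le_eq)
  qed (use bb in auto)
  have "F_in X F (\<lambda>n. cesaro ?tail n / be k)" unfolding F_in_def using fat_res fin by blast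
  then show False using tailinv[OF be(1) be(2)] by blast
qed

definition Lth where "Lth k m = (SOME M. \<not> Pk k m M)"

lemma Lth: "Lth k m \<le> M \<Longrightarrow> \<not> Pk k m M"
proof -
  assume a: "Lth k m \<le> M"
  have "\<not> Pk k m (Lth k m)" unfolding Lth_def by (rule someI_ex[OF L_ex])
  then show ?thesis using Pk_mono[OF a] by blast
qed

primrec Ms :: "nat \<Rightarrow> nat" where
  "Ms 0 = Tth 0"
| "Ms (Suc k) = max (Suc (Ms k)) (max (Tth (Suc k)) (Lth k (Ms k)))"

lemma Ms_sm: "strict_mono Ms"
  unfolding strict_mono_Suc_iff by (simp add: less_max_iff_disj)

lemma Ms_U: "N (tlM (Ms k) (wk k)) \<le> (1/2) ^ (k + 1)"
  by (rule Tth) (cases k, auto)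

lemma Ms_L: "\<not> Pk k (Ms k) (Ms (Suc k))"
  by (rule Lth) simp


definition yy where "yy n = (if Ms 0 \<le> n then ff n / al (idx Ms n) else 0)"

lemma yy_nn: "0 \<le> yy n" unfolding yy_def using ff_pos[of n] al[of "idx Ms n"] by simp

lemma cy_le: "Ms 0 \<le> n \<Longrightarrow> cesaro yy n \<le> W n / al (idx Ms n)"
proof -
  assume n: "Ms 0 \<le> n"
  let ?k = "idx Ms n"
  have "cesaro yy n \<le> cesaro (\<lambda>i. (1 / al ?k) * ff i) n"
  proof (rule ces_mono_loc)
    fix i assume i: "i \<le> n"
    show "yy i \<le> (1 / al ?k) * ff i"
    proof (cases "Ms 0 \<le> i")
      case False then show ?thesis unfolding yy_def using ff_pos[of i] al[of ?k] by simp
    next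
      case True
      have "idx Ms i \<le> ?k" by (rule idx_mono[OF Ms_sm True i])
      then have "al ?k \<le> al (idx Ms i)" by (rule al_anti)
      then have "ff i / al (idx Ms i) \<le> ff i / al ?k"
        by (intro divide_left_mono) (use ff_pos[of i] al in \<open>auto intro: mult_pos_pos\<close>)
      then show ?thesis unfolding yy_def using True by simp
    qed
  qed
  also have "\<dots> = W n / al ?k" unfolding ces_scale W_def by simp
  finally show ?thesis .
qed

lemma cy_zero: "n < Ms 0 \<Longrightarrow> cesaro yy n = 0"
proof -
  assume n: "n < Ms 0"
  have "cesaro yy n = cesaro (\<lambda>i. 0) n" by (rule ces_local) (use n in \<open>auto simp: yy_def\<close>)
  then show ?thesis by (simp add: cesaro_def)
qed

lemma Wal_le: "W n / al k \<le> bb"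
proof -
  have "bb * (1/2) \<le> bb * al k" using al(1)[of k] ss_bounds bb by (intro mult_left_mono) auto
  then have "W n \<le> bb * al k" using W_le[of n] bb by linarith
  then show ?thesis using al(2)[of k] by (simp add: pos_divide_le_eq)
qed

definition GG where "GG n = (if Ms 0 \<le> n then wk (idx Ms n) n else 0)"

lemma GG_in: "GG \<in> X \<and> N GG \<le> 1"
proof -
  define G where "G K n = (if Ms 0 \<le> n \<and> n < Ms K then wk (idx Ms n) n else 0)" for K n
  define pc where "pc K n = (if Ms K \<le> n \<and> n < Ms (Suc K) then wk K n else 0)" for K n
  have pc: "pc K \<in> X \<and> N (pc K) \<le> (1/2) ^ (K + 1)" for K
  proof -
    have tin: "tlM (Ms K) (wk K) \<in> X" using tlM_in[OF wk_in] by blast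
    have "pc K \<in> X \<and> N (pc K) \<le> N (tlM (Ms K) (wk K))"
      by (rule ideal[OF tin]) (auto simp: pc_def tlM_def)
    then show ?thesis using Ms_U[of K] by linarith
  qed
  have G0: "G 0 = (\<lambda>n. 0)" unfolding G_def by (simp add: fun_eq_iff)
  have GS: "G (Suc K) = (\<lambda>n. G K n + pc K n)" for K
  proof
    fix n
    have m0: "Ms 0 \<le> Ms K" using strict_mono_less_eq[OF Ms_sm, of 0 K] by simp
    have mK: "Ms K < Ms (Suc K)" using strict_monoD[OF Ms_sm, of K "Suc K"] by simp
    show "G (Suc K) n = G K n + pc K n"
    proof (cases "Ms K \<le> n \<and> n < Ms (Suc K)")
      case True
      then have "idx Ms n = K" using idx_unique[OF Ms_sm] by blast
      then show ?thesis using True m0 unfolding G_def pc_def by auto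
    next
      case False then show ?thesis unfolding G_def pc_def using mK by auto
    qed
  qed
  have Gin: "G K \<in> X" for K by (rule FS[of "Ms K"]) (simp add: G_def)
  have GN: "N (G K) \<le> 1 - (1/2) ^ K" for K
  proof (induction K)
    case 0 then show ?case using G0 N_zero_iff[OF zero_in] by simp
  next
    case (Suc K)
    have "N (G (Suc K)) \<le> N (G K) + N (pc K)" unfolding GS using N_tri[OF Gin] pc by blast
    also have "\<dots> \<le> 1 - (1/2) ^ K + (1/2) ^ (K + 1)" using Suc pc[of K] by linarith
    also have "\<dots> = 1 - (1/2) ^ Suc K" by simp
    finally show ?case .
  qed
  have res: "GG \<in> X \<and> (\<lambda>K. N (G K)) \<longlonglongrightarrow> N GG"
  proof (rule fat_use[where B=1])
    show "0 \<le> G K n" for K n unfolding G_def using wk_nn by simp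
    show "G K n \<le> G (Suc K) n" for K n
      unfolding G_def using wk_nn strict_monoD[OF Ms_sm, of K "Suc K"] by auto
    show "(\<lambda>K. G K n) \<longlonglongrightarrow> GG n" for n
    proof (rule ev_lim[of "Suc n"])
      fix K assume "Suc n \<le> K"
      then have "n < Ms K" using sm_ge[OF Ms_sm, of K] by simp
      then show "G K n = GG n" unfolding G_def GG_def by simp
    qed
    show "G K \<in> X" for K by (rule Gin)
    show "N (G K) \<le> 1" for K
    proof -
      have "0 < (1/2::real) ^ K" by simp
      then show ?thesis using GN[of K] by linarith
    qed
  qed
  have G1: "N (G K) \<le> 1" for K
  proof -
    have "0 < (1/2::real) ^ K" by simp
    then show ?thesis using GN[of K] by linarith
  qed
  have "N GG \<le> 1" by (rule LIMSEQ_le_const2[OF conjunct2[OF res]]) (use G1 in auto)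
  then show ?thesis using res by blast
qed

lemma Y1: "F_in X F (cesaro yy) \<and> N (Fcomp F (cesaro yy)) \<le> 1"
proof -
  have cnn: "0 \<le> cesaro yy n" for n by (rule ces_nn[OF yy_nn])
  have le: "\<bar>Fcomp F (cesaro yy) n\<bar> \<le> \<bar>GG n\<bar>" for n
  proof (cases "Ms 0 \<le> n")
    case False
    then show ?thesis using cy_zero[of n] by (simp add: Fcomp_eq rF_def F0)
  next
    case True
    let ?k = "idx Ms n"
    have wnn: "0 \<le> W n / al ?k" using W_nn[of n] al[of ?k] by simp
    have fin: "F (W n / al ?k) \<noteq> \<infinity>" using fin_le[OF wnn Wal_le bb(2)] .
    have "rF (cesaro yy n) \<le> rF (W n / al ?k)" by (rule rF_mono[OF cnn cy_le[OF True] fin])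
    moreover have "Fcomp F (cesaro yy) n = rF (cesaro yy n)" by (simp only: Fcomp_eq abs_of_nonneg[OF cnn])
    moreover have "GG n = rF (W n / al ?k)" unfolding GG_def wk_def using True
      by (simp only: if_True Fcomp_eq abs_of_nonneg[OF wnn])
    moreover have "0 \<le> rF (cesaro yy n)" by (rule rF_nn[OF cnn])
    ultimately show ?thesis by simp
  qed
  have GGx: "GG \<in> X" using GG_in by blast
  have i: "Fcomp F (cesaro yy) \<in> X \<and> N (Fcomp F (cesaro yy)) \<le> N GG" by (rule ideal[OF GGx le])
  have fin: "F \<bar>cesaro yy n\<bar> \<noteq> \<infinity>" for n
  proof (cases "Ms 0 \<le> n")
    case False then show ?thesis using cy_zero[of n] by (simp add: F0)
  next
    case True
    have "\<bar>cesaro yy n\<bar> \<le> bb" using cy_le[OF True] Wal_le[of n "idx Ms n"] cnn[of n] by simp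
    then show ?thesis using fin_le bb by simp
  qed
  show ?thesis unfolding F_in_def using i fin GG_in by auto
qed


definition Tmap :: "(nat \<Rightarrow> real) \<Rightarrow> nat \<Rightarrow> real" where
  "Tmap a = (\<lambda>n. a (fst (prod_decode (idx Ms n))) * yy n)"

lemma linf_le: "a \<in> linf \<Longrightarrow> \<bar>a j\<bar> \<le> linf_norm a"
  unfolding linf_def linf_norm_def by (rule cSUP_upper) auto

lemma linf_least: "(\<And>j. \<bar>a j\<bar> \<le> r) \<Longrightarrow> linf_norm a \<le> r"
  unfolding linf_norm_def by (rule cSUP_least) auto

lemma T_upper:
  assumes a: "a \<in> linf" and r: "0 < r" "linf_norm a \<le> r"
  shows "CL_admissible X N F (cesaro (\<lambda>n. \<bar>Tmap a n\<bar>)) r"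
proof -
  let ?c = "linf_norm a"
  have c0: "0 \<le> ?c" using linf_le[OF a, of 0] by simp
  have ci: "cesaro (\<lambda>n. \<bar>Tmap a n\<bar>) n \<le> ?c * cesaro yy n" for n
  proof -
    have "cesaro (\<lambda>n. \<bar>Tmap a n\<bar>) n \<le> cesaro (\<lambda>i. ?c * yy i) n"
    proof (rule ces_mono)
      fix i
      have "\<bar>Tmap a i\<bar> = \<bar>a (fst (prod_decode (idx Ms i)))\<bar> * yy i"
        unfolding Tmap_def using yy_nn[of i] by (simp add: abs_mult)
      also have "\<dots> \<le> ?c * yy i" by (rule mult_right_mono[OF linf_le[OF a] yy_nn])
      finally show "\<bar>Tmap a i\<bar> \<le> ?c * yy i" .
    qed
    then show ?thesis unfolding ces_scale .
  qed
  have le: "\<bar>cesaro (\<lambda>n. \<bar>Tmap a n\<bar>) n / r\<bar> \<le> \<bar>cesaro yy n\<bar>" for n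
  proof -
    have t0: "0 \<le> cesaro (\<lambda>n. \<bar>Tmap a n\<bar>) n" by (rule ces_nn) simp
    have y0: "0 \<le> cesaro yy n" by (rule ces_nn[OF yy_nn])
    have "?c * cesaro yy n \<le> r * cesaro yy n" by (rule mult_right_mono[OF r(2) y0])
    then have "cesaro (\<lambda>n. \<bar>Tmap a n\<bar>) n \<le> r * cesaro yy n" using ci[of n] by linarith
    then have "cesaro (\<lambda>n. \<bar>Tmap a n\<bar>) n / r \<le> cesaro yy n" using r(1) by (simp add: pos_divide_le_eq mult.commute)
    moreover have "0 \<le> cesaro (\<lambda>n. \<bar>Tmap a n\<bar>) n / r" using t0 r by simp
    ultimately show ?thesis using y0 by linarith
  qed
  have Yf: "F_in X F (cesaro yy)" using Y1 by blast
  have m: "F_in X F (\<lambda>n. cesaro (\<lambda>n. \<bar>Tmap a n\<bar>) n / r) \<and>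
      N (Fcomp F (\<lambda>n. cesaro (\<lambda>n. \<bar>Tmap a n\<bar>) n / r)) \<le> N (Fcomp F (cesaro yy))"
    by (rule M1[OF le Yf])
  show ?thesis unfolding CL_admissible_def using m Y1 r by linarith
qed

lemma T_lower:
  assumes adm: "CL_admissible X N F (cesaro (\<lambda>n. \<bar>Tmap a n\<bar>)) r"
  shows "\<bar>a j\<bar> \<le> r"
proof (rule ccontr)
  assume "\<not> ?thesis"
  then have Ar: "r < \<bar>a j\<bar>" by simp
  have r: "0 < r" using adm unfolding CL_admissible_def by blast
  let ?A = "\<bar>a j\<bar>"
  have A0: "0 < ?A" using Ar r by simp
  define rho where "rho = r / ?A"
  have rho: "0 < rho" "rho < 1" unfolding rho_def using r Ar A0 by auto
  define i0 where "i0 = nat \<lceil>2 / (1 - rho)\<rceil> + 2"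
  define k where "k = prod_encode (j, i0)"
  have ki: "i0 \<le> k" unfolding k_def by (rule le_prod_encode_2)
  have kj: "fst (prod_decode k) = j" unfolding k_def by simp
  have k2: "2 \<le> k" using ki unfolding i0_def by simp
  have "2 / (1 - rho) \<le> real i0" unfolding i0_def by linarith
  then have "2 / (1 - rho) \<le> real k + 2" using ki by linarith
  then have "2 \<le> (real k + 2) * (1 - rho)" using rho by (simp add: divide_le_eq)
  then have e: "eps k \<le> (1 - rho) / 2" unfolding eps_def by (simp add: divide_le_eq field_simps)
  have "rho * (1 + eps k) \<le> 1 - eps k"
  proof -
    have "rho * eps k \<le> eps k" using rho eps[of k] by (simp add: mult_le_cancel_right1)
    then show ?thesis using e by (simp add: algebra_simps)
  qed
  then have "rho * al k \<le> be k" unfolding al_def be_def using ss_pos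
    by (metis mult.left_commute mult_left_mono less_imp_le)
  then have "r * al k \<le> ?A * be k" unfolding rho_def using A0 by (simp add: divide_le_eq mult.commute mult.left_commute)
  then have key: "1 / be k \<le> ?A / (al k * r)" using be(1)[of k] al(2)[of k] r
    by (simp add: divide_simps mult.commute)
  let ?b = "blk (Ms k) (Ms (Suc k))"
  have bi: "(?A / al k) * ?b i \<le> \<bar>Tmap a i\<bar>" for i
  proof (cases "Ms k \<le> i \<and> i < Ms (Suc k)")
    case True
    have ik: "idx Ms i = k" using idx_unique[OF Ms_sm] True by blast
    have m0: "Ms 0 \<le> i" using True strict_mono_less_eq[OF Ms_sm, of 0 k] by simp
    have "\<bar>Tmap a i\<bar> = ?A * (ff i / al k)"
      unfolding Tmap_def yy_def using ik kj m0 ff_pos[of i] al[of k] by (simp add: abs_mult)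
    then show ?thesis using True unfolding blk_def by simp
  next
    case False
    then have "?b i = 0" unfolding blk_def by (simp only: if_not_P[OF False] if_False)
    then show ?thesis by simp
  qed
  have le: "\<bar>cesaro ?b n / be k\<bar> \<le> \<bar>cesaro (\<lambda>n. \<bar>Tmap a n\<bar>) n / r\<bar>" for n
  proof -
    have b0: "0 \<le> cesaro ?b n" by (rule ces_nn[OF blk_nn])
    have "(?A / al k) * cesaro ?b n \<le> cesaro (\<lambda>n. \<bar>Tmap a n\<bar>) n"
      unfolding ces_scale[symmetric] by (rule ces_mono[OF bi])
    then have s1: "(?A / al k) * cesaro ?b n / r \<le> cesaro (\<lambda>n. \<bar>Tmap a n\<bar>) n / r"
      by (rule divide_right_mono) (use r in simp)
    have "cesaro ?b n / be k = (1 / be k) * cesaro ?b n" by simp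
    also have "\<dots> \<le> (?A / (al k * r)) * cesaro ?b n" by (rule mult_right_mono[OF key b0])
    also have "\<dots> = (?A / al k) * cesaro ?b n / r" by simp
    finally have "cesaro ?b n / be k \<le> cesaro (\<lambda>n. \<bar>Tmap a n\<bar>) n / r" using s1 by linarith
    moreover have "0 \<le> cesaro ?b n / be k" using b0 be(1)[of k] by simp
    ultimately show ?thesis by linarith
  qed
  have Fi: "F_in X F (\<lambda>n. cesaro (\<lambda>n. \<bar>Tmap a n\<bar>) n / r)" using adm unfolding CL_admissible_def by blast
  have n1: "N (Fcomp F (\<lambda>n. cesaro (\<lambda>n. \<bar>Tmap a n\<bar>) n / r)) \<le> 1" using adm unfolding CL_admissible_def by blast
  have m: "F_in X F (\<lambda>n. cesaro ?b n / be k) \<and>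
     N (Fcomp F (\<lambda>n. cesaro ?b n / be k)) \<le> N (Fcomp F (\<lambda>n. cesaro (\<lambda>n. \<bar>Tmap a n\<bar>) n / r))"
    by (rule M1[OF le Fi])
  have "Pk k (Ms k) (Ms (Suc k))" unfolding Pk_def using m n1 k2 by simp
  then show False using Ms_L by blast
qed

lemma T_norm: "a \<in> linf \<Longrightarrow> cesaro_norm X N F (Tmap a) = linf_norm a"
proof -
  assume a: "a \<in> linf"
  let ?c = "linf_norm a"
  have c0: "0 \<le> ?c" using linf_le[OF a, of 0] by simp
  have S: "{r. CL_admissible X N F (cesaro (\<lambda>n. \<bar>Tmap a n\<bar>)) r} = {r. 0 < r \<and> ?c \<le> r}"
  proof (intro set_eqI iffI)
    fix r assume "r \<in> {r. CL_admissible X N F (cesaro (\<lambda>n. \<bar>Tmap a n\<bar>)) r}"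
    then have adm: "CL_admissible X N F (cesaro (\<lambda>n. \<bar>Tmap a n\<bar>)) r" by simp
    have "0 < r" using adm unfolding CL_admissible_def by blast
    moreover have "?c \<le> r" by (rule linf_least[OF T_lower[OF adm]])
    ultimately show "r \<in> {r. 0 < r \<and> ?c \<le> r}" by simp
  next
    fix r assume "r \<in> {r. 0 < r \<and> ?c \<le> r}"
    then show "r \<in> {r. CL_admissible X N F (cesaro (\<lambda>n. \<bar>Tmap a n\<bar>)) r}" using T_upper[OF a] by simp
  qed
  show ?thesis
  proof (cases "?c = 0")
    case True
    have "{r. 0 < r \<and> ?c \<le> r} = {0<..}" using True by auto
    then show ?thesis unfolding cesaro_norm_def CL_norm_def S using True by simp
  next
    case False
    then have "{r. 0 < r \<and> ?c \<le> r} = {?c..}" using c0 by auto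
    then show ?thesis unfolding cesaro_norm_def CL_norm_def S by simp
  qed
qed

lemma T_space: "a \<in> linf \<Longrightarrow> Tmap a \<in> cesaro_space X N F"
proof -
  assume a: "a \<in> linf"
  have c0: "0 \<le> linf_norm a" using linf_le[OF a, of 0] by simp
  have "CL_admissible X N F (cesaro (\<lambda>n. \<bar>Tmap a n\<bar>)) (linf_norm a + 1)"
    by (rule T_upper[OF a]) (use c0 in auto)
  then show ?thesis unfolding cesaro_space_def CL_space_def by blast
qed

lemma T_add: "Tmap (\<lambda>n. a n + b n) = (\<lambda>n. Tmap a n + Tmap b n)"
  unfolding Tmap_def by (simp add: fun_eq_iff algebra_simps)

lemma T_smul: "Tmap (\<lambda>n. c * a n) = (\<lambda>n. c * Tmap a n)"
  unfolding Tmap_def by (simp add: fun_eq_iff algebra_simps)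

lemma max_mult_nn: "0 \<le> (y::real) \<Longrightarrow> max p q * y = max (p * y) (q * y)"
proof (cases "p \<le> q")
  case True
  assume y: "0 \<le> y"
  have "p * y \<le> q * y" by (rule mult_right_mono[OF True y])
  then show ?thesis using True by (simp add: max_absorb2)
next
  case False
  assume y: "0 \<le> y"
  have qp: "q \<le> p" using False by simp
  have "q * y \<le> p * y" by (rule mult_right_mono[OF qp y])
  then show ?thesis using qp by (simp add: max_absorb1)
qed

lemma T_max: "Tmap (\<lambda>n. max (a n) (b n)) = (\<lambda>n. max (Tmap a n) (Tmap b n))"
  unfolding Tmap_def by (simp add: fun_eq_iff max_mult_nn[OF yy_nn])

lemma main: "contains_lattice_isometric_linf (cesaro_space X N F) (cesaro_norm X N F)"
  unfolding contains_lattice_isometric_linf_def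
  using T_space T_add T_smul T_norm T_max by blast

end

theorem corollary4p3:
  fixes X :: "(nat \<Rightarrow> real) set" and N :: "(nat \<Rightarrow> real) \<Rightarrow> real"
    and F :: "real \<Rightarrow> ereal"
  assumes "ri_seq_space X N"
    and "order_continuous X N"
    and "fatou_property X N"
    and "orlicz F"
    and "CL_class_closed_under_cesaro X N F"
    and "\<forall>u>0. F u \<noteq> 0"
    and "\<not> delta2_zero F"
  shows "contains_lattice_isometric_linf (cesaro_space X N F) (cesaro_norm X N F)"
proof -
  interpret CS X N F using assms by (unfold_locales) auto
  show ?thesis by (rule main)
qed

end
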